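(* Let $t,r\in\mathbb{R}$ with $r>e^{-t}$. For all integers $n\ge\lceil r\rceil$, $$\int_{n+1}^\infty\frac{dx}{24x^2(t+\log x)^2}+\frac{1}{24(n+1)(t+\log(n+1))^2}\le\beta(t,r)-\beta_n(t,r)$$ $$\le\int_n^\infty\frac{dx}{24x^2(t+\log x)^2}+\frac{1}{24(n+\frac12)(t+\log(n+\frac12))^2}+\frac{1}{24n^2(t+\log n)^2}+\frac{1}{12n^2(t+\log n)^3}.$$ Moreover, $\beta(t,r)=\beta_n(t,r)+\frac{1+o(1)}{12n(\log n)^2}$ as $n\to\infty$.
   Context: $\operatorname{li}(x)=\int_0^x\frac{du}{\log u}$ (principal value) is the logarithmic integral, $\gamma$ the Euler–Mascheroni constant, $H_k=\sum_{j=1}^k1/j$. For real $t,r$ with $\lceil r\rceil>e^{-t}$ and real $x\ge r$, define $\beta_x(t,r)=\frac{\operatorname{li}(e^tx)}{e^t}-\sum_{r\le k<x}\frac{1}{H_k-\gamma+t}$ (sum over integers $k$), and $\beta(t,r)=\lim_{n\to\infty}\beta_n(t,r)$ (this limit exists). *)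

theory Defs
  imports "HOL-Analysis.Analysis" "HOL-Library.Landau_Symbols"
begin

text \<open>Logarithmic integral as a Cauchy principal value (meaningful for x > 1).\<close>
definition li :: "real \<Rightarrow> real" where
  "li x = Lim (at_right 0)
     (\<lambda>\<epsilon>. integral {0..1 - \<epsilon>} (\<lambda>u. 1 / ln u) + integral {1 + \<epsilon>..x} (\<lambda>u. 1 / ln u))"

text \<open>beta_x(t,r); the sum ranges over the integers k with r \<le> k < x
  (in the relevant range r > 0, so these are positive integers).\<close>
definition beta_x :: "real \<Rightarrow> real \<Rightarrow> real \<Rightarrow> real" where
  "beta_x x t r = li (exp t * x) / exp t
     - (\<Sum>k\<in>{k::int. r \<le> real_of_int k \<and> real_of_int k < x}.
          1 / (harm (nat k) - euler_mascheroni + t))"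

definition beta :: "real \<Rightarrow> real \<Rightarrow> real" where
  "beta t r = lim (\<lambda>n::nat. beta_x (real n) t r)"

end

theory Submission
  imports Defs "HOL-Real_Asymp.Real_Asymp"
begin


lemma deriv_inv_pow:
  fixes x a c :: real assumes "x \<noteq> a"
  shows "((\<lambda>x. c/(x-a)^n) has_real_derivative (- c * real n/(x-a)^(Suc n))) (at x)"
proof -
  have d: "((\<lambda>x. c * inverse ((x-a)^n)) has_real_derivative (c * (- (real n * (x-a)^(n-1)) / ((x-a)^n)^2))) (at x)"
    using assms by (auto intro!: derivative_eq_intros simp: divide_inverse power2_eq_square)
  have eq: "c * (- (real n * (x-a)^(n-1)) / ((x-a)^n)^2) = - c * real n/(x-a)^(Suc n)"
  proof (cases n)
    case (Suc m)
    define y where "y = x - a"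
    have y: "y \<noteq> 0" using assms y_def by simp
    have e: "((x-a)^n)^2 = y^m * y^(Suc n)" unfolding y_def Suc by (simp add: power2_eq_square power_add[symmetric])
    have e2: "(x-a)^(n-1) = y^m" unfolding y_def Suc by simp
    have e3: "(x-a)^Suc n = y^Suc n" unfolding y_def ..
    have ym: "y^m \<noteq> 0" "y^Suc n \<noteq> 0" using y by auto
    show ?thesis unfolding e e2 e3 using ym by (simp add: divide_simps del: power_Suc)
  qed simp
  have f: "(\<lambda>x. c * inverse ((x-a)^n)) = (\<lambda>x. c/(x-a)^n)" by (simp add: divide_inverse)
  show ?thesis using d unfolding f eq .
qed

lemma deriv_ln_shift:
  fixes x c :: real assumes "x + c > 0"
  shows "((\<lambda>x. ln (x + c)) has_real_derivative 1/(x+c)) (at x)"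
  using assms by (auto intro!: derivative_eq_intros simp: divide_inverse)

lemma nonneg_from_deriv:
  fixes F F' :: "real \<Rightarrow> real"
  assumes d: "\<And>x. x \<ge> a \<Longrightarrow> (F has_real_derivative F' x) (at x)"
    and n: "\<And>x. x \<ge> a \<Longrightarrow> F' x \<le> 0"
    and l: "(F \<longlongrightarrow> 0) at_top" and x: "x \<ge> a"
  shows "F x \<ge> 0"
proof -
  have "\<forall>\<^sub>F y in at_top. F y \<le> F x"
    using eventually_ge_at_top[of x]
  proof eventually_elim
    case (elim y)
    show ?case
    proof (rule DERIV_nonpos_imp_nonincreasing[OF elim])
      fix z assume "x \<le> z" "z \<le> y"
      hence "a \<le> z" using x by linarith
      thus "\<exists>y. DERIV F z :> y \<and> y \<le> 0" using d n by blast
    qed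
  qed
  then show ?thesis using tendsto_upperbound[OF l] by simp
qed

lemma harm_upper_step:
  fixes x :: real assumes x: "x \<ge> 1"
  shows "ln (x + 1/2) - ln (x - 1/2) - 1/x \<le> (1/24)/(x-1/2)^2 - (1/24)/(x+1/2)^2"
proof -
  define F where "F = (\<lambda>x::real. (1/24)/(x-1/2)^2 - (1/24)/(x-(-1/2))^2 - ln(x+1/2) + ln(x+(-1/2)) + 1/(x-0)^1)"
  define F' where "F' = (\<lambda>x::real. - (1/24) * real 2/(x-1/2)^Suc 2 - (- (1/24) * real 2/(x-(-1/2))^Suc 2)
        - 1/(x+1/2) + 1/(x+(-1/2)) + (- 1 * real 1/(x-0)^Suc 1))"
  have D: "(F has_real_derivative F' y) (at y) \<and> F' y \<le> 0" if y: "1 \<le> y" for y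
  proof
    have y2: "y^2 \<ge> 1" using y by (simp add: one_le_power)
    have p: "y - 1/2 > 0" "y + 1/2 > 0" "y > 0" "y^2 - 1/4 > 0" using y y2 by linarith+
    show "(F has_real_derivative F' y) (at y)"
      unfolding F_def F'_def using p
      by (intro DERIV_add DERIV_diff deriv_inv_pow deriv_ln_shift) auto
    have A: "1/(y-1/2) - 1/(y+1/2) - 1/y^2 = 1/(4*y^2*(y^2-1/4))"
      using p by (simp add: field_simps power2_eq_square)
    have B: "(1/24) * 2/(y-1/2)^3 - (1/24) * 2/(y+1/2)^3 = (3*y^2+1/4)/(12*(y^2-1/4)^3)"
    proof -
      define a where "a = y - 1/2"
      define b where "b = y + 1/2"
      have ab: "a > 0" "b > 0" using p a_def b_def by auto
      have "(1/24) * 2/a^3 - (1/24) * 2/b^3 = (b^3 - a^3)/(12*(a*b)^3)"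
        using ab by (simp add: field_simps power_mult_distrib)
      also have "b^3 - a^3 = 3*y^2+1/4" unfolding a_def b_def by (simp add: power2_eq_square power3_eq_cube algebra_simps)
      also have "a*b = y^2-1/4" unfolding a_def b_def by (simp add: power2_eq_square algebra_simps)
      finally show ?thesis unfolding a_def b_def .
    qed
    have F'e: "F' y = 1/(4*y^2*(y^2-1/4)) - (3*y^2+1/4)/(12*(y^2-1/4)^3)"
      unfolding F'_def using A B by (simp add: algebra_simps) (simp add: power2_eq_square)
    define P where "P = y^2 - 1/4"
    have P: "P > 0" using p P_def by simp
    have poly: "3 * P^2 \<le> y^2 * (3*y^2+1/4)"
      unfolding P_def using y2 by (simp add: power2_eq_square algebra_simps)
    have "1/(4*y^2*P) \<le> (3*y^2+1/4)/(12*P^3)"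
    proof -
      have "12*P^3 = (4*P) * (3 * P^2)" by (simp add: power2_eq_square power3_eq_cube)
      also have "\<dots> \<le> (4*P) * (y^2 * (3*y^2+1/4))" using poly P by (intro mult_left_mono) auto
      finally have "12*P^3 \<le> (4*y^2*P) * (3*y^2+1/4)" by (simp add: algebra_simps)
      then show ?thesis using P p by (simp add: divide_simps) (simp add: algebra_simps)
    qed
    then show "F' y \<le> 0" unfolding F'e P_def by simp
  qed
  have "(F \<longlongrightarrow> 0) at_top" unfolding F_def by real_asymp
  then have "F x \<ge> 0" using nonneg_from_deriv[of 1 F F'] D x by blast
  then show ?thesis unfolding F_def by simp
qed

lemma harm_lower_step:
  fixes x :: real assumes x: "x \<ge> 1"
  shows "ln (x + 1/2) - ln (x - 1/2) - 1/x \<ge> (1/24)/x^2 - (1/24)/(x+1)^2"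
proof -
  define F where "F = (\<lambda>x::real. ln(x+1/2) - ln(x+(-1/2)) - 1/(x-0)^1 - (1/24)/(x-0)^2 + (1/24)/(x-(-1))^2)"
  define F' where "F' = (\<lambda>x::real. 1/(x+1/2) - 1/(x+(-1/2)) - (- 1 * real 1/(x-0)^Suc 1)
        - (- (1/24) * real 2/(x-0)^Suc 2) + (- (1/24) * real 2/(x-(-1))^Suc 2))"
  have D: "(F has_real_derivative F' y) (at y) \<and> F' y \<le> 0" if y: "1 \<le> y" for y
  proof
    have y2: "y^2 \<ge> 1" using y by (simp add: one_le_power)
    have p: "y - 1/2 > 0" "y + 1/2 > 0" "y > 0" "y^2 - 1/4 > 0" "y + 1 > 0" using y y2 by linarith+
    show "(F has_real_derivative F' y) (at y)"
      unfolding F_def F'_def using p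
      by (intro DERIV_add DERIV_diff deriv_inv_pow deriv_ln_shift) auto
    have A: "1/(y+1/2) - 1/(y-1/2) + 1/y^2 = - (1/(4*y^2*(y^2-1/4)))"
      using p by (simp add: field_simps power2_eq_square)
    have B: "(1/24) * 2/y^3 - (1/24) * 2/(y+1)^3 = (3*y^2+3*y+1)/(12*y^3*(y+1)^3)"
    proof -
      define b where "b = y + 1"
      have ab: "y > 0" "b > 0" using p b_def by auto
      have "(1/24) * 2/y^3 - (1/24) * 2/b^3 = (b^3 - y^3)/(12*y^3*b^3)"
        using ab by (simp add: field_simps power_mult_distrib)
      also have "b^3 - y^3 = 3*y^2+3*y+1" unfolding b_def by (simp add: power2_eq_square power3_eq_cube algebra_simps)
      finally show ?thesis unfolding b_def .
    qed
    have F'e: "F' y = (3*y^2+3*y+1)/(12*y^3*(y+1)^3) - 1/(4*y^2*(y^2-1/4))"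
      unfolding F'_def using A B by (simp add: algebra_simps) (simp add: power2_eq_square)?
    define P where "P = y^2 - 1/4"
    have P: "P > 0" using p P_def by simp
    have poly: "P * (3*y^2+3*y+1) \<le> 3*y*(y+1)^3"
    proof -
      have "3*y*(y+1)^3 - P * (3*y^2+3*y+1) = 6*y^3 + 35/4*y^2 + 15/4*y + 1/4"
        unfolding P_def by (simp add: power2_eq_square power3_eq_cube algebra_simps)
      moreover have "y^3 \<ge> 0" "y^2 \<ge> 0" using p by auto
      ultimately show ?thesis using p by linarith
    qed
    have "(3*y^2+3*y+1)/(12*y^3*(y+1)^3) \<le> 1/(4*y^2*P)"
    proof -
      have "(4*y^2*P) * (3*y^2+3*y+1) = (4*y^2) * (P * (3*y^2+3*y+1))" by (simp add: algebra_simps)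
      also have "\<dots> \<le> (4*y^2) * (3*y*(y+1)^3)" using poly p by (intro mult_left_mono) auto
      also have "\<dots> = 12*y^3*(y+1)^3" by (simp add: power2_eq_square power3_eq_cube)
      finally have "(4*y^2*P) * (3*y^2+3*y+1) \<le> 12*y^3*(y+1)^3" .
      then show ?thesis using P p by (simp add: divide_simps) (simp add: algebra_simps)?
    qed
    then show "F' y \<le> 0" unfolding F'e P_def by simp
  qed
  have "(F \<longlongrightarrow> 0) at_top" unfolding F_def by real_asymp
  then have "F x \<ge> 0" using nonneg_from_deriv[of 1 F F'] D x by blast
  then show ?thesis unfolding F_def by simp
qed

lemma e_lim: "(\<lambda>k. harm k - euler_mascheroni - ln (real k + 1/2) :: real) \<longlonglongrightarrow> 0"
proof -
  have "(\<lambda>k. ln (real k) - ln (real k + 1/2)) \<longlonglongrightarrow> 0" by real_asymp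
  from tendsto_add[OF euler_mascheroni_LIMSEQ this]
  have "(\<lambda>k. harm k - ln (real k) + (ln (real k) - ln (real k + 1/2))) \<longlonglongrightarrow> euler_mascheroni" by simp
  then have "(\<lambda>k. harm k - ln (real k) + (ln (real k) - ln (real k + 1/2)) - euler_mascheroni) \<longlonglongrightarrow> euler_mascheroni - euler_mascheroni"
    by (intro tendsto_diff tendsto_const)
  moreover have "\<And>k. harm k - ln (real k) + (ln (real k) - ln (real k + 1/2)) - euler_mascheroni = (harm k - euler_mascheroni - ln (real k + 1/2) :: real)"
    by linarith
  ultimately show ?thesis by (simp only: diff_self)
qed

lemma e_step: "harm (Suc k) = harm k + 1 / (real k + 1)"
  by (simp add: harm_Suc divide_inverse add.commute)

lemma harm_e_upper: "harm k - euler_mascheroni - ln (real k + 1/2) \<le> (1/24)/(real k + 1/2)^2"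
proof -
  define s where "s = (\<lambda>k. (harm k - euler_mascheroni - ln (real k + 1/2)) - (1/24)/(real k + 1/2)^2 :: real)"
  have "incseq s"
  proof (rule incseq_SucI)
    fix n
    have "ln ((real n + 1) + 1/2) - ln ((real n + 1) - 1/2) - 1 / (real n + 1)
       \<le> (1/24)/((real n + 1)-1/2)^2 - (1/24)/((real n + 1)+1/2)^2"
      by (rule harm_upper_step) simp
    moreover have "(real n + 1) - 1/2 = real n + 1/2" by simp
    moreover have "real (Suc n) + 1/2 = (real n + 1) + 1/2" by simp
    ultimately show "s n \<le> s (Suc n)" unfolding s_def e_step[of n] by simp
  qed
  moreover have "s \<longlonglongrightarrow> 0 - 0" unfolding s_def
    by (intro tendsto_diff e_lim) real_asymp
  ultimately show ?thesis using incseq_le[of s 0 k] unfolding s_def by simp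
qed

lemma harm_e_lower: "harm k - euler_mascheroni - ln (real k + 1/2) \<ge> (1/24)/(real k + 1)^2"
proof -
  define s where "s = (\<lambda>k. (harm k - euler_mascheroni - ln (real k + 1/2)) - (1/24)/(real k + 1)^2 :: real)"
  have "decseq s"
  proof (rule decseq_SucI)
    fix n
    have "ln ((real n + 1) + 1/2) - ln ((real n + 1) - 1/2) - 1 / (real n + 1)
       \<ge> (1/24)/(real n + 1)^2 - (1/24)/((real n + 1)+1)^2"
      by (rule harm_lower_step) simp
    moreover have "(real n + 1) - 1/2 = real n + 1/2" by simp
    moreover have "real (Suc n) + 1/2 = (real n + 1) + 1/2" "real (Suc n) + 1 = (real n + 1) + 1" by simp_all
    ultimately show "s (Suc n) \<le> s n" unfolding s_def e_step[of n] by simp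
  qed
  moreover have "s \<longlonglongrightarrow> 0 - 0" unfolding s_def
    by (intro tendsto_diff e_lim) real_asymp
  ultimately show ?thesis using decseq_ge[of s 0 k] unfolding s_def by simp
qed




lemma tangent_ineq:
  fixes \<phi> Dp Dpp :: "real \<Rightarrow> real"
  assumes C: "convex C"
    and d1: "\<And>y. y \<in> C \<Longrightarrow> (\<phi> has_real_derivative Dp y) (at y)"
    and d2: "\<And>y. y \<in> C \<Longrightarrow> (Dp has_real_derivative Dpp y) (at y)"
    and nn: "\<And>y. y \<in> C \<Longrightarrow> Dpp y \<ge> 0"
    and m: "m \<in> interior C" and x: "x \<in> C"
  shows "\<phi> x \<ge> \<phi> m + Dp m * (x - m)"
proof -
  have cv: "convex_on C \<phi>" by (rule f''_ge0_imp_convex[OF C d1 d2 nn])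
  have mC: "m \<in> C" using m interior_subset by blast
  have "\<phi> x - \<phi> m \<ge> Dp m * (x - m)"
    by (rule convex_on_imp_above_tangent[OF cv convex_connected[OF C] m x])
       (rule has_field_derivative_at_within[OF d1[OF mC]])
  then show ?thesis by simp
qed

lemma ftc_real:
  fixes F F' :: "real \<Rightarrow> real"
  assumes "a \<le> b" "\<And>x. x \<in> {a..b} \<Longrightarrow> (F has_real_derivative F' x) (at x)"
  shows "(F' has_integral (F b - F a)) {a..b}"
  using assms(1)
proof (rule fundamental_theorem_of_calculus)
  fix x assume "x \<in> {a..b}"
  then show "(F has_vector_derivative F' x) (at x within {a..b})"
    using assms(2) by (simp add: has_real_derivative_iff_has_vector_derivative[symmetric] has_field_derivative_at_within)
qed

lemma quad_integral:
  fixes a b A B C :: real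
  assumes ab: "a \<le> b"
  shows "((\<lambda>x. A + B*(x-(a+b)/2) + C*(x-(a+b)/2)^2/2) has_integral (A*(b-a) + C*(b-a)^3/24)) {a..b}"
proof -
  define m where "m = (a+b)/2"
  have "((\<lambda>x. A + B*(x-m) + C*(x-m)^2/2) has_integral
     ((A*b + B*(b-m)^2/2 + C*(b-m)^3/6) - (A*a + B*(a-m)^2/2 + C*(a-m)^3/6))) {a..b}"
    by (rule ftc_real[OF ab, where F = "\<lambda>x. A*x + B*(x-m)^2/2 + C*(x-m)^3/6"])
       (auto intro!: derivative_eq_intros simp: power2_eq_square power3_eq_cube field_simps)
  moreover have "(A*b + B*(b-m)^2/2 + C*(b-m)^3/6) - (A*a + B*(a-m)^2/2 + C*(a-m)^3/6) = A*(b-a) + C*(b-a)^3/24"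
    unfolding m_def by (simp add: power2_eq_square power3_eq_cube field_simps)
  ultimately show ?thesis unfolding m_def by simp
qed

lemma int_ge_quad:
  fixes P :: "real \<Rightarrow> real"
  assumes ab: "a \<le> b" and P: "P integrable_on {a..b}"
    and le: "\<And>x. x \<in> {a..b} \<Longrightarrow> A + B*(x-(a+b)/2) + C*(x-(a+b)/2)^2/2 \<le> P x"
  shows "A*(b-a) + C*(b-a)^3/24 \<le> integral {a..b} P"
  by (rule has_integral_le[OF quad_integral[OF ab] integrable_integral[OF P] le])

lemma int_le_quad:
  fixes P :: "real \<Rightarrow> real"
  assumes ab: "a \<le> b" and P: "P integrable_on {a..b}"
    and le: "\<And>x. x \<in> {a..b} \<Longrightarrow> P x \<le> A + B*(x-(a+b)/2) + C*(x-(a+b)/2)^2/2"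
  shows "integral {a..b} P \<le> A*(b-a) + C*(b-a)^3/24"
  by (rule has_integral_le[OF integrable_integral[OF P] quad_integral[OF ab] le])

definition ff :: "real \<Rightarrow> real \<Rightarrow> real" where "ff t x = 1/(t + ln x)"
definition gg :: "real \<Rightarrow> real \<Rightarrow> real" where "gg t x = 1/(24 * x^2 * (t + ln x)^2)"
definition hh :: "real \<Rightarrow> real \<Rightarrow> real" where "hh t x = 1/(12 * x^2 * (t + ln x)^3)"
definition GG :: "real \<Rightarrow> real \<Rightarrow> real" where "GG t x = 1/(24 * x * (t + ln x)^2)"

lemma dom_pos: fixes t x :: real assumes "exp (-t) < x" shows "0 < x" "0 < t + ln x"
proof -
  show x: "0 < x" using assms exp_gt_zero[of "-t"] by linarith
  have "ln (exp (-t)) < ln x" using assms x by (subst ln_less_cancel_iff) auto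
  then show "0 < t + ln x" by simp
qed

lemma ff_deriv: assumes "0 < x" "0 < t + ln x"
  shows "(ff t has_real_derivative (-1/(x*(t+ln x)^2))) (at x)"
  unfolding ff_def using assms
  by (auto intro!: derivative_eq_intros simp: field_simps power2_eq_square)

lemma ff1_deriv: assumes "0 < x" "0 < t + ln x"
  shows "((\<lambda>x. -1/(x*(t+ln x)^2)) has_real_derivative (24 * (gg t x + hh t x))) (at x)"
proof -
  define L where "L = t + ln x"
  have lx: "ln x = L - t" and L: "L \<noteq> 0" using L_def assms by auto
  show ?thesis unfolding gg_def hh_def using assms
    by (auto intro!: derivative_eq_intros simp: lx L field_simps power2_eq_square power3_eq_cube)
qed

lemma GG_deriv: assumes "0 < x" "0 < t + ln x"
  shows "(GG t has_real_derivative (- (gg t x + hh t x))) (at x)"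
proof -
  define L where "L = t + ln x"
  have lx: "ln x = L - t" and L: "L \<noteq> 0" using L_def assms by auto
  show ?thesis unfolding GG_def gg_def hh_def using assms
    by (auto intro!: derivative_eq_intros simp: lx L field_simps power2_eq_square power3_eq_cube)
qed

definition gg1 :: "real \<Rightarrow> real \<Rightarrow> real" where
  "gg1 t x = -(1/12)*(1/(x^3*(t+ln x)^2) + 1/(x^3*(t+ln x)^3))"
definition gg2 :: "real \<Rightarrow> real \<Rightarrow> real" where
  "gg2 t x = (1/12)*(3/(x^4*(t+ln x)^2) + 5/(x^4*(t+ln x)^3) + 3/(x^4*(t+ln x)^4))"
definition hh1 :: "real \<Rightarrow> real \<Rightarrow> real" where
  "hh1 t x = -(1/12)*(2/(x^3*(t+ln x)^3) + 3/(x^3*(t+ln x)^4))"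
definition hh2 :: "real \<Rightarrow> real \<Rightarrow> real" where
  "hh2 t x = (1/12)*(6/(x^4*(t+ln x)^3) + 15/(x^4*(t+ln x)^4) + 12/(x^4*(t+ln x)^5))"

lemma gg_deriv: assumes "0 < x" "0 < t + ln x"
  shows "(gg t has_real_derivative gg1 t x) (at x)"
proof -
  define L where "L = t + ln x"
  have lx: "ln x = L - t" and L: "L \<noteq> 0" using L_def assms by auto
  show ?thesis unfolding gg_def gg1_def using assms
    by (auto intro!: derivative_eq_intros simp: lx L field_simps power2_eq_square power3_eq_cube)
qed

lemma gg1_deriv: assumes "0 < x" "0 < t + ln x"
  shows "(gg1 t has_real_derivative gg2 t x) (at x)"
proof -
  define L where "L = t + ln x"
  have lx: "ln x = L - t" and L: "L \<noteq> 0" using L_def assms by auto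
  show ?thesis unfolding gg1_def gg2_def using assms
    by (auto intro!: derivative_eq_intros simp: lx L field_simps power2_eq_square power3_eq_cube eval_nat_numeral)
qed

lemma hh_deriv: assumes "0 < x" "0 < t + ln x"
  shows "(hh t has_real_derivative hh1 t x) (at x)"
proof -
  define L where "L = t + ln x"
  have lx: "ln x = L - t" and L: "L \<noteq> 0" using L_def assms by auto
  show ?thesis unfolding hh_def hh1_def using assms
    by (auto intro!: derivative_eq_intros simp: lx L field_simps power2_eq_square power3_eq_cube eval_nat_numeral)
qed

lemma hh1_deriv: assumes "0 < x" "0 < t + ln x"
  shows "(hh1 t has_real_derivative hh2 t x) (at x)"
proof -
  define L where "L = t + ln x"
  have lx: "ln x = L - t" and L: "L \<noteq> 0" using L_def assms by auto
  show ?thesis unfolding hh1_def hh2_def using assms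
    by (auto intro!: derivative_eq_intros simp: lx L field_simps power2_eq_square power3_eq_cube eval_nat_numeral)
qed

lemma gg2_nonneg: assumes "0 < x" "0 < t + ln x" shows "gg2 t x \<ge> 0"
  unfolding gg2_def using assms by (intro mult_nonneg_nonneg add_nonneg_nonneg divide_nonneg_pos) auto

lemma hh2_nonneg: assumes "0 < x" "0 < t + ln x" shows "hh2 t x \<ge> 0"
  unfolding hh2_def using assms by (intro mult_nonneg_nonneg add_nonneg_nonneg divide_nonneg_pos) auto

lemma pos_facts: fixes t x :: real assumes "exp (-t) < x"
  shows "gg t x > 0" "hh t x > 0" "GG t x > 0" "ff t x > 0"
  using dom_pos[OF assms] unfolding gg_def hh_def GG_def ff_def by auto

lemma gg_hh_mono: fixes t x y :: real assumes x: "exp (-t) < x" and xy: "x \<le> y"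
  shows "gg t y \<le> gg t x" "hh t y \<le> hh t x"
proof -
  have y: "exp (-t) < y" using x xy by linarith
  note px = dom_pos[OF x] and py = dom_pos[OF y]
  have L: "t + ln x \<le> t + ln y" using px py xy by simp
  have x2: "x^2 \<le> y^2" using px xy by (intro power_mono) auto
  have L2: "(t + ln x)^2 \<le> (t + ln y)^2" using px L by (intro power_mono) auto
  have L3: "(t + ln x)^3 \<le> (t + ln y)^3" using px L by (intro power_mono) auto
  have "24 * x^2 * (t + ln x)^2 \<le> 24 * y^2 * (t + ln y)^2"
    using x2 L2 px by (intro mult_mono) auto
  then show "gg t y \<le> gg t x" unfolding gg_def using px py
    by (intro divide_left_mono) auto
  have "12 * x^2 * (t + ln x)^3 \<le> 12 * y^2 * (t + ln y)^3"
    using x2 L3 px by (intro mult_mono) auto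
  then show "hh t y \<le> hh t x" unfolding hh_def using px py
    by (intro divide_left_mono) auto
qed

lemma M1: fixes t k :: real assumes k: "exp (-t) < k - 1/2"
  shows "gg t k + hh t k \<le> GG t (k - 1/2) - GG t (k + 1/2)"
proof -
  let ?C = "{k - 1/2..k + 1/2}"
  have inC: "exp (-t) < y" if "y \<in> ?C" for y using that k by auto
  have I: "((\<lambda>x. gg t x + hh t x) has_integral (GG t (k - 1/2) - GG t (k + 1/2))) ?C"
  proof -
    have "((\<lambda>x. - (gg t x + hh t x)) has_integral (GG t (k + 1/2) - GG t (k - 1/2))) ?C"
    proof (rule ftc_real)
      fix x assume "x \<in> ?C"
      from dom_pos[OF inC[OF this]] show "(GG t has_real_derivative - (gg t x + hh t x)) (at x)"
        by (rule GG_deriv)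
    qed simp
    from has_integral_neg[OF this] show ?thesis by (simp add: add.commute)
  qed
  have tang: "gg t x + hh t x \<ge> (gg t k + hh t k) + (gg1 t k + hh1 t k) * (x - k)" if "x \<in> ?C" for x
  proof (rule tangent_ineq[where C = ?C and \<phi> = "\<lambda>x. gg t x + hh t x"
        and Dp = "\<lambda>x. gg1 t x + hh1 t x" and Dpp = "\<lambda>x. gg2 t x + hh2 t x"])
    fix y assume "y \<in> ?C"
    note p = dom_pos[OF inC[OF this]]
    show "((\<lambda>x. gg t x + hh t x) has_real_derivative gg1 t y + hh1 t y) (at y)"
      using p by (intro DERIV_add gg_deriv hh_deriv)
    show "((\<lambda>x. gg1 t x + hh1 t x) has_real_derivative gg2 t y + hh2 t y) (at y)"
      using p by (intro DERIV_add gg1_deriv hh1_deriv)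
    show "gg2 t y + hh2 t y \<ge> 0" using p gg2_nonneg hh2_nonneg by (simp add: add_nonneg_nonneg)
  qed (use that in auto)
  have "(gg t k + hh t k) * ((k + 1/2) - (k - 1/2)) + 0 * ((k + 1/2) - (k - 1/2))^3/24
        \<le> integral ?C (\<lambda>x. gg t x + hh t x)"
  proof (rule int_ge_quad)
    show "(\<lambda>x. gg t x + hh t x) integrable_on ?C" using I by blast
    fix x assume "x \<in> ?C"
    then show "gg t k + hh t k + (gg1 t k + hh1 t k) * (x - ((k - 1/2) + (k + 1/2))/2) + 0 * (x - ((k - 1/2) + (k + 1/2))/2)^2/2
       \<le> gg t x + hh t x" using tang by simp
  qed simp
  then show ?thesis using integral_unique[OF I] by simp
qed

lemma quad_deriv: "((\<lambda>x::real. c*(x-m)^2/2) has_real_derivative c*(x-m)) (at x)"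
  by (auto intro!: derivative_eq_intros)

lemma lin_deriv: "((\<lambda>x::real. c*(x-m)) has_real_derivative c) (at x)"
  by (auto intro!: derivative_eq_intros)



lemma gg_integrable: fixes t a b :: real assumes "exp (-t) < a"
  shows "gg t integrable_on {a..b}"
proof (rule integrable_continuous_real, rule DERIV_continuous_on)
  fix x assume "x \<in> {a..b}"
  then have "a \<le> x" by simp
  then have "exp (-t) < x" using assms by linarith
  then have "(gg t has_real_derivative gg1 t x) (at x)" using dom_pos by (intro gg_deriv) 
  then show "(gg t has_real_derivative gg1 t x) (at x within {a..b})"
    by (rule has_field_derivative_at_within)
qed

lemma hh_integrable: fixes t a b :: real assumes "exp (-t) < a"
  shows "hh t integrable_on {a..b}"
proof (rule integrable_continuous_real, rule DERIV_continuous_on)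
  fix x assume "x \<in> {a..b}"
  then have "a \<le> x" by simp
  then have "exp (-t) < x" using assms by linarith
  then have "(hh t has_real_derivative hh1 t x) (at x)" using dom_pos by (intro hh_deriv) 
  then show "(hh t has_real_derivative hh1 t x) (at x within {a..b})"
    by (rule has_field_derivative_at_within)
qed

lemma ff_integrable: fixes t a b :: real assumes "exp (-t) < a"
  shows "ff t integrable_on {a..b}"
proof (rule integrable_continuous_real, rule DERIV_continuous_on)
  fix x assume "x \<in> {a..b}"
  then have "a \<le> x" by simp
  then have "exp (-t) < x" using assms by linarith
  then have "(ff t has_real_derivative (-1/(x*(t+ln x)^2))) (at x)" using dom_pos by (intro ff_deriv) 
  then show "(ff t has_real_derivative (-1/(x*(t+ln x)^2))) (at x within {a..b})"
    by (rule has_field_derivative_at_within)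
qed


lemma M2: fixes t k :: real assumes k: "exp (-t) < k"
  shows "gg t (k + 1/2) \<le> integral {k..k+1} (gg t)"
proof -
  let ?C = "{k..k+1}"
  have inC: "exp (-t) < y" if "y \<in> ?C" for y using that k by auto
  have tang: "gg t x \<ge> gg t (k + 1/2) + gg1 t (k + 1/2) * (x - (k + 1/2))" if "x \<in> ?C" for x
  proof (rule tangent_ineq[where C = ?C and \<phi> = "gg t" and Dp = "gg1 t" and Dpp = "gg2 t"])
    fix y assume "y \<in> ?C"
    note p = dom_pos[OF inC[OF this]]
    show "(gg t has_real_derivative gg1 t y) (at y)" using p by (rule gg_deriv)
    show "(gg1 t has_real_derivative gg2 t y) (at y)" using p by (rule gg1_deriv)
    show "gg2 t y \<ge> 0" using p by (rule gg2_nonneg)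
  qed (use that in auto)
  have "gg t (k + 1/2) * ((k + 1) - k) + 0 * ((k + 1) - k)^3/24 \<le> integral ?C (gg t)"
  proof (rule int_ge_quad)
    show "gg t integrable_on ?C" using gg_integrable k by blast
    fix x assume x: "x \<in> ?C"
    have mid: "(k + (k + 1))/2 = k + 1/2" by simp
    show "gg t (k + 1/2) + gg1 t (k + 1/2) * (x - (k + (k + 1))/2) + 0 * (x - (k + (k + 1))/2)^2/2
       \<le> gg t x" unfolding mid using tang[OF x] by simp
  qed simp
  then show ?thesis by simp
qed


lemma M3: fixes t k :: real assumes k: "exp (-t) < k"
  shows "ff t (k + 1/2) + (gg t (k+1) + hh t (k+1)) \<le> integral {k..k+1} (ff t)"
    and "integral {k..k+1} (ff t) \<le> ff t (k + 1/2) + (gg t k + hh t k)"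
proof -
  let ?C = "{k..k+1}"
  let ?m = "k + 1/2"
  let ?f1 = "\<lambda>x. -1/(x*(t+ln x)^2)"
  have inC: "exp (-t) < y" if "y \<in> ?C" for y using that k by auto
  have mid: "(k + (k + 1))/2 = k + 1/2" by simp
  have fint: "ff t integrable_on ?C" using ff_integrable k by blast
  define c where "c = 24 * (gg t (k+1) + hh t (k+1))"
  define c2 where "c2 = 24 * (gg t k + hh t k)"
  have tang1: "ff t x - c*(x-?m)^2/2 \<ge> (ff t ?m - c*(?m-?m)^2/2) + (?f1 ?m - c*(?m-?m)) * (x - ?m)" if "x \<in> ?C" for x
  proof (rule tangent_ineq[where C = ?C and \<phi> = "\<lambda>x. ff t x - c*(x-?m)^2/2" and Dp = "\<lambda>x. ?f1 x - c*(x-?m)"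
        and Dpp = "\<lambda>x. 24 * (gg t x + hh t x) - c"])
    fix y assume y: "y \<in> ?C"
    note p = dom_pos[OF inC[OF this]]
    show "((\<lambda>x. ff t x - c*(x-?m)^2/2) has_real_derivative ?f1 y - c*(y-?m)) (at y)"
      using p by (intro DERIV_diff ff_deriv quad_deriv)
    show "((\<lambda>x. ?f1 x - c*(x-?m)) has_real_derivative 24 * (gg t y + hh t y) - c) (at y)"
      using p by (intro DERIV_diff ff1_deriv lin_deriv)
    have "y \<le> k + 1" using y by auto
    then have "gg t (k+1) \<le> gg t y" "hh t (k+1) \<le> hh t y" using gg_hh_mono[OF inC[OF y]] by auto
    then show "24 * (gg t y + hh t y) - c \<ge> 0" unfolding c_def by simp
  qed (use that in auto)
  have "ff t ?m * ((k + 1) - k) + c * ((k + 1) - k)^3/24 \<le> integral ?C (ff t)"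
  proof (rule int_ge_quad[OF _ fint])
    fix x assume "x \<in> ?C"
    then show "ff t ?m + ?f1 ?m * (x - (k + (k + 1))/2) + c * (x - (k + (k + 1))/2)^2/2
       \<le> ff t x" using tang1[of x] unfolding mid by simp
  qed simp
  then show "ff t (k + 1/2) + (gg t (k+1) + hh t (k+1)) \<le> integral {k..k+1} (ff t)" unfolding c_def by (simp add: add_divide_distrib)
  have tang2: "c2*(x-?m)^2/2 - ff t x \<ge> (c2*(?m-?m)^2/2 - ff t ?m) + (c2*(?m-?m) - ?f1 ?m) * (x - ?m)" if "x \<in> ?C" for x
  proof (rule tangent_ineq[where C = ?C and \<phi> = "\<lambda>x. c2*(x-?m)^2/2 - ff t x" and Dp = "\<lambda>x. c2*(x-?m) - ?f1 x"
        and Dpp = "\<lambda>x. c2 - 24 * (gg t x + hh t x)"])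
    fix y assume y: "y \<in> ?C"
    note p = dom_pos[OF inC[OF this]]
    show "((\<lambda>x. c2*(x-?m)^2/2 - ff t x) has_real_derivative c2*(y-?m) - ?f1 y) (at y)"
      using p by (intro DERIV_diff ff_deriv quad_deriv)
    show "((\<lambda>x. c2*(x-?m) - ?f1 x) has_real_derivative c2 - 24 * (gg t y + hh t y)) (at y)"
      using p by (intro DERIV_diff ff1_deriv lin_deriv)
    have "k \<le> y" using y by auto
    then have "gg t y \<le> gg t k" "hh t y \<le> hh t k" using gg_hh_mono[OF k] by auto
    then show "c2 - 24 * (gg t y + hh t y) \<ge> 0" unfolding c2_def by simp
  qed (use that in auto)
  have "integral ?C (ff t) \<le> ff t ?m * ((k + 1) - k) + c2 * ((k + 1) - k)^3/24"
  proof (rule int_le_quad[OF _ fint])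
    fix x assume "x \<in> ?C"
    then show "ff t x \<le> ff t ?m + ?f1 ?m * (x - (k + (k + 1))/2) + c2 * (x - (k + (k + 1))/2)^2/2"
      using tang2[of x] unfolding mid by simp
  qed simp
  then show "integral {k..k+1} (ff t) \<le> ff t (k + 1/2) + (gg t k + hh t k)" unfolding c2_def by (simp add: add_divide_distrib)
qed




definition qt :: "real \<Rightarrow> real" where
  "qt u = (if u = 1 then 1/2 else 1/ln u - 1/(u-1))"

lemma ev_neq_at: fixes x y :: real shows "\<forall>\<^sub>F u in at x. u \<noteq> y"
proof (cases "x = y")
  case True then show ?thesis by (simp add: eventually_at_filter)
next
  case False
  then have "\<forall>\<^sub>F u in nhds x. u \<noteq> y" by (rule t1_space_nhds)
  then show ?thesis by (simp add: eventually_at_filter eventually_mono)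
qed

lemma qt_cont: "continuous_on {0..2} qt"
proof (rule continuous_on_IccI)
  have ev: "\<forall>\<^sub>F u in at_right 0. qt u = 1/ln u - 1/(u-1)"
    using eventually_at_right_real[OF zero_less_one] by (rule eventually_mono) (auto simp: qt_def)
  have "((\<lambda>u. 1/ln u - 1/(u-1)) \<longlongrightarrow> 1) (at_right (0::real))" by real_asymp
  moreover have "qt 0 = 1" by (simp add: qt_def)
  ultimately show "(qt \<longlongrightarrow> qt 0) (at_right 0)" using tendsto_cong[OF ev] by simp
  have ev2: "\<forall>\<^sub>F u in at_left 2. qt u = 1/ln u - 1/(u-1)"
    using eventually_at_left_real[of 1 2] by (rule eventually_mono) (auto simp: qt_def)
  have "((\<lambda>u. 1/ln u - 1/(u-1)) \<longlongrightarrow> 1/ln 2 - 1/(2-1)) (at_left (2::real))"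
    by (intro tendsto_intros) auto
  moreover have "qt 2 = 1/ln 2 - 1/(2-1)" by (simp add: qt_def)
  ultimately show "(qt \<longlongrightarrow> qt 2) (at_left 2)" using tendsto_cong[OF ev2] by simp
  fix x :: real assume x: "0 < x" "x < 2"
  have ev3: "\<forall>\<^sub>F u in at x. qt u = 1/ln u - 1/(u-1)"
    using ev_neq_at[where x=x and y=1] by (rule eventually_mono) (auto simp: qt_def)
  show "(qt \<longlongrightarrow> qt x) (at x)"
  proof (cases "x = 1")
    case True
    have "((\<lambda>u. 1/ln u - 1/(u-1)) \<longlongrightarrow> 1/2) (at (1::real))" by real_asymp
    then have "(qt \<longlongrightarrow> 1/2) (at 1)" using tendsto_cong[OF ev3] True by simp
    then show ?thesis using True by (simp add: qt_def)
  next
    case False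
    have "ln x \<noteq> 0" using x False by simp
    then have "((\<lambda>u. 1/ln u - 1/(u-1)) \<longlongrightarrow> 1/ln x - 1/(x-1)) (at x)"
      using x False by (intro tendsto_intros) auto
    moreover have "qt x = 1/ln x - 1/(x-1)" using False by (simp add: qt_def)
    ultimately show ?thesis using tendsto_cong[OF ev3] by simp
  qed
qed simp

lemma qt_integrable: "0 \<le> a \<Longrightarrow> b \<le> 2 \<Longrightarrow> qt integrable_on {a..b}"
  by (rule integrable_continuous_real, rule continuous_on_subset[OF qt_cont]) auto

lemma lninv_left:
  fixes e :: real assumes e: "0 < e" "e < 1"
  shows "((\<lambda>u. 1/ln u) has_integral (integral {0..1-e} qt + ln e)) {0..1-e}"
proof -
  have I1: "(qt has_integral integral {0..1-e} qt) {0..1-e}"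
    using qt_integrable[of 0 "1-e"] e by auto
  have I2: "((\<lambda>u. 1/(u-1)) has_integral (ln (1 - (1-e)) - ln (1 - 0))) {0..1-e}"
  proof (rule ftc_real)
    fix x :: real assume "x \<in> {0..1-e}"
    then have x: "1 - x > 0" using e by auto
    show "((\<lambda>u. ln (1 - u)) has_real_derivative 1/(x-1)) (at x)"
      using x by (auto intro!: derivative_eq_intros simp: field_simps)
  qed (use e in auto)
  have "((\<lambda>u. qt u + 1/(u-1)) has_integral (integral {0..1-e} qt + ln e)) {0..1-e}"
    using has_integral_add[OF I1 I2] by simp
  moreover have "qt u + 1/(u-1) = 1/ln u" if "u \<in> {0..1-e}" for u
    using that e by (auto simp: qt_def)
  ultimately show ?thesis using has_integral_cong by (metis (no_types, lifting))
qed

lemma lninv_right: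
  fixes e :: real assumes e: "0 < e" "e < 1"
  shows "((\<lambda>u. 1/ln u) has_integral (integral {1+e..2} qt - ln e)) {1+e..2}"
proof -
  have I1: "(qt has_integral integral {1+e..2} qt) {1+e..2}"
    using qt_integrable[of "1+e" 2] e by auto
  have I2: "((\<lambda>u. 1/(u-1)) has_integral (ln (2 - 1) - ln ((1+e) - 1))) {1+e..2}"
  proof (rule ftc_real)
    fix x :: real assume "x \<in> {1+e..2}"
    then have x: "x - 1 > 0" using e by auto
    show "((\<lambda>u. ln (u - 1)) has_real_derivative 1/(x-1)) (at x)"
      using x by (auto intro!: derivative_eq_intros simp: field_simps)
  qed (use e in auto)
  have "((\<lambda>u. qt u + 1/(u-1)) has_integral (integral {1+e..2} qt - ln e)) {1+e..2}"
    using has_integral_add[OF I1 I2] by simp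
  moreover have "qt u + 1/(u-1) = 1/ln u" if "u \<in> {1+e..2}" for u
    using that e by (auto simp: qt_def)
  ultimately show ?thesis using has_integral_cong by (metis (no_types, lifting))
qed

definition PV :: "real \<Rightarrow> real \<Rightarrow> real" where
  "PV e x = integral {0..1 - e} (\<lambda>u. 1 / ln u) + integral {1 + e..x} (\<lambda>u. 1 / ln u)"

lemma li_PV: "li x = Lim (at_right 0) (\<lambda>e. PV e x)"
  unfolding li_def PV_def ..

lemma PV2_lim: "((\<lambda>e. PV e 2) \<longlongrightarrow> integral {0..2} qt) (at_right 0)"
proof -
  define Q where "Q = (\<lambda>y. integral {0..y} qt)"
  have Qc: "continuous_on {0..2} Q" unfolding Q_def
    by (rule indefinite_integral_continuous_1[OF qt_integrable]) auto
  have ev: "\<forall>\<^sub>F e in at_right 0. PV e 2 = Q (1 - e) + (Q 2 - Q (1 + e))"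
    using eventually_at_right_real[OF zero_less_one]
  proof (rule eventually_mono)
    fix e :: real assume "e \<in> {0<..<1}"
    then have e: "0 < e" "e < 1" by auto
    have c: "integral {0..1+e} qt + integral {1+e..2} qt = integral {0..2} qt"
      by (rule Henstock_Kurzweil_Integration.integral_combine) (use e qt_integrable[of 0 2] in auto)
    show "PV e 2 = Q (1 - e) + (Q 2 - Q (1 + e))"
      unfolding PV_def Q_def integral_unique[OF lninv_left[OF e]] integral_unique[OF lninv_right[OF e]]
      using c by simp
  qed
  have l1: "((\<lambda>e. Q (1 - e)) \<longlongrightarrow> Q 1) (at_right 0)"
  proof -
    have "((\<lambda>e::real. 1 - e) \<longlongrightarrow> 1) (at_right 0)" by real_asymp
    moreover have "\<forall>\<^sub>F e in at_right 0. 1 - e \<in> {0..2::real}"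
      using eventually_at_right_real[OF zero_less_one] by (rule eventually_mono) auto
    ultimately show ?thesis using continuous_on_tendsto_compose[OF Qc, of "\<lambda>e. 1 - e" 1] by (simp add: o_def)
  qed
  have l2: "((\<lambda>e. Q (1 + e)) \<longlongrightarrow> Q 1) (at_right 0)"
  proof -
    have "((\<lambda>e::real. 1 + e) \<longlongrightarrow> 1) (at_right 0)" by real_asymp
    moreover have "\<forall>\<^sub>F e in at_right 0. 1 + e \<in> {0..2::real}"
      using eventually_at_right_real[OF zero_less_one] by (rule eventually_mono) auto
    ultimately show ?thesis using continuous_on_tendsto_compose[OF Qc, of "\<lambda>e. 1 + e" 1] by (simp add: o_def)
  qed
  have "((\<lambda>e. Q (1 - e) + (Q 2 - Q (1 + e))) \<longlongrightarrow> Q 1 + (Q 2 - Q 1)) (at_right 0)"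
    by (intro tendsto_intros l1 l2)
  then have "((\<lambda>e. PV e 2) \<longlongrightarrow> Q 1 + (Q 2 - Q 1)) (at_right 0)" using tendsto_cong[OF ev] by simp
  then show ?thesis unfolding Q_def by simp
qed

lemma lninv_cont: fixes a b :: real assumes "1 < a" shows "continuous_on {a..b} (\<lambda>u. 1 / ln u)"
  by (intro continuous_intros) (use assms in auto)

lemma lninv_integrable: fixes a b :: real assumes "1 < a" shows "(\<lambda>u. 1 / ln u) integrable_on {a..b}"
  by (rule integrable_continuous_real, rule lninv_cont, rule assms)

lemma PV_shift:
  fixes a b :: real assumes ab: "1 < a" "a \<le> b"
  shows "\<forall>\<^sub>F e in at_right 0. PV e b = PV e a + integral {a..b} (\<lambda>u. 1 / ln u)"
  using eventually_at_right_real[of 0 "a - 1"] ab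
proof (intro eventually_mono[OF eventually_at_right_real[of 0 "a - 1"]])
  fix e assume "e \<in> {0<..<a - 1}"
  then have e: "0 < e" "1 + e < a" by auto
  have "integral {1+e..a} (\<lambda>u. 1 / ln u) + integral {a..b} (\<lambda>u. 1 / ln u) = integral {1+e..b} (\<lambda>u. 1 / ln u)"
    by (rule Henstock_Kurzweil_Integration.integral_combine) (use e ab lninv_integrable[of "1+e" b] in auto)
  then show "PV e b = PV e a + integral {a..b} (\<lambda>u. 1 / ln u)" unfolding PV_def by simp
qed (use ab in auto)


lemma PV_conv: fixes a :: real assumes a: "1 < a"
  shows "((\<lambda>e. PV e a) \<longlongrightarrow> li a) (at_right 0)"
proof -
  have "\<exists>l. ((\<lambda>e. PV e a) \<longlongrightarrow> l) (at_right 0)"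
  proof (cases "2 \<le> a")
    case True
    from PV2_lim have "((\<lambda>e. PV e 2 + integral {2..a} (\<lambda>u. 1 / ln u)) \<longlongrightarrow> integral {0..2} qt + integral {2..a} (\<lambda>u. 1 / ln u)) (at_right 0)"
      by (intro tendsto_intros)
    moreover have ev: "\<forall>\<^sub>F e in at_right 0. PV e a = PV e 2 + integral {2..a} (\<lambda>u. 1 / ln u)"
      by (rule PV_shift) (use True in auto)
    ultimately have "((\<lambda>e. PV e a) \<longlongrightarrow> integral {0..2} qt + integral {2..a} (\<lambda>u. 1 / ln u)) (at_right 0)"
      using tendsto_cong[OF ev] by simp
    then show ?thesis by blast
  next
    case False
    from PV2_lim have "((\<lambda>e. PV e 2 - integral {a..2} (\<lambda>u. 1 / ln u)) \<longlongrightarrow> integral {0..2} qt - integral {a..2} (\<lambda>u. 1 / ln u)) (at_right 0)"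
      by (intro tendsto_intros)
    moreover have ev0: "\<forall>\<^sub>F e in at_right 0. PV e 2 = PV e a + integral {a..2} (\<lambda>u. 1 / ln u)"
      by (rule PV_shift) (use False a in auto)
    have ev: "\<forall>\<^sub>F e in at_right 0. PV e a = PV e 2 - integral {a..2} (\<lambda>u. 1 / ln u)"
      by (rule eventually_mono[OF ev0]) simp
    ultimately have "((\<lambda>e. PV e a) \<longlongrightarrow> integral {0..2} qt - integral {a..2} (\<lambda>u. 1 / ln u)) (at_right 0)"
      using tendsto_cong[OF ev] by simp
    then show ?thesis by blast
  qed
  then obtain l where l: "((\<lambda>e. PV e a) \<longlongrightarrow> l) (at_right 0)" by blast
  have "li a = l" unfolding li_PV by (rule tendsto_Lim[OF _ l]) simp
  then show ?thesis using l by simp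
qed

lemma li_diff: fixes a b :: real assumes ab: "1 < a" "a \<le> b"
  shows "li b - li a = integral {a..b} (\<lambda>u. 1 / ln u)"
proof -
  have "((\<lambda>e. PV e a + integral {a..b} (\<lambda>u. 1 / ln u)) \<longlongrightarrow> li a + integral {a..b} (\<lambda>u. 1 / ln u)) (at_right 0)"
    by (intro tendsto_add tendsto_const PV_conv ab)
  then have 1: "((\<lambda>e. PV e b) \<longlongrightarrow> li a + integral {a..b} (\<lambda>u. 1 / ln u)) (at_right 0)"
    using tendsto_cong[OF PV_shift[OF ab]] by simp
  have 2: "((\<lambda>e. PV e b) \<longlongrightarrow> li b) (at_right 0)" using ab by (intro PV_conv) auto
  have "li b = li a + integral {a..b} (\<lambda>u. 1 / ln u)"
    by (rule tendsto_unique[OF _ 2 1]) simp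
  then show ?thesis by simp
qed

lemma li_deriv: fixes u :: real assumes u: "1 < u"
  shows "(li has_real_derivative 1 / ln u) (at u)"
proof -
  define a where "a = (1 + u) / 2"
  have a: "1 < a" "a < u" using u a_def by auto
  have i: "((\<lambda>v. integral {a..v} (\<lambda>u. 1 / ln u)) has_real_derivative 1 / ln u) (at u within {a..u+1})"
    by (rule integral_has_real_derivative[OF lninv_cont[OF a(1)]]) (use a in auto)
  have d: "((\<lambda>v. li a + integral {a..v} (\<lambda>u. 1 / ln u)) has_real_derivative 0 + 1 / ln u) (at u within {a..u+1})"
    by (rule DERIV_add[OF DERIV_const i])
  have "at u within {a..u+1} = at u" using a by (intro at_within_Icc_at) auto
  with d have d2: "((\<lambda>v. li a + integral {a..v} (\<lambda>u. 1 / ln u)) has_real_derivative 1 / ln u) (at u)" by simp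
  show ?thesis
  proof (rule has_field_derivative_transform_within_open[OF d2, of "{a<..}"])
    fix v assume "v \<in> {a<..}"
    then have "a \<le> v" by simp
    then show "li a + integral {a..v} (\<lambda>u. 1 / ln u) = li v" using li_diff[of a v] a by simp
  qed (use a in auto)
qed

definition Phi :: "real \<Rightarrow> real \<Rightarrow> real" where "Phi t y = li (exp t * y) / exp t"

lemma Phi_deriv: fixes t z :: real assumes z: "exp (-t) < z"
  shows "(Phi t has_real_derivative ff t z) (at z)"
proof -
  note p = dom_pos[OF z]
  have ln: "ln (exp t * z) = t + ln z" using p by (simp add: ln_mult)
  have pos: "0 < exp t * z" using p by simp
  have "0 < ln (exp t * z)" using p ln by simp
  then have gt: "1 < exp t * z" using ln_gt_zero_iff[OF pos] by simp
  have l: "(li has_real_derivative 1 / ln (exp t * z)) (at (exp t * z))" by (rule li_deriv[OF gt])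
  have m: "((\<lambda>y. exp t * y) has_real_derivative exp t * 1) (at z)" by (rule DERIV_cmult[OF DERIV_ident])
  have "((\<lambda>y. li (exp t * y)) has_real_derivative 1 / ln (exp t * z) * (exp t * 1)) (at z)"
    by (rule DERIV_chain2[OF l m])
  from DERIV_cdivide[OF this, of "exp t"]
  show ?thesis unfolding Phi_def ff_def ln by simp
qed

lemma Phi_ftc: fixes t x y :: real assumes x: "exp (-t) < x" and xy: "x \<le> y"
  shows "(ff t has_integral (Phi t y - Phi t x)) {x..y}"
proof (rule ftc_real[OF xy])
  fix z assume "z \<in> {x..y}"
  then have "exp (-t) < z" using x by auto
  then show "(Phi t has_real_derivative ff t z) (at z)" by (rule Phi_deriv)
qed




lemma ggh_ftc: fixes t a b :: real assumes a: "exp (-t) < a" and ab: "a \<le> b"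
  shows "((\<lambda>x. gg t x + hh t x) has_integral (GG t a - GG t b)) {a..b}"
proof -
  have "((\<lambda>x. - (gg t x + hh t x)) has_integral (GG t b - GG t a)) {a..b}"
  proof (rule ftc_real[OF ab])
    fix x assume "x \<in> {a..b}"
    then have "exp (-t) < x" using a by auto
    from dom_pos[OF this] show "(GG t has_real_derivative - (gg t x + hh t x)) (at x)"
      by (rule GG_deriv)
  qed
  from has_integral_neg[OF this] show ?thesis by (simp add: add.commute)
qed

lemma ggh_sum_int: fixes t a b :: real assumes a: "exp (-t) < a" and ab: "a \<le> b"
  shows "integral {a..b} (gg t) + integral {a..b} (hh t) = GG t a - GG t b"
proof -
  have "integral {a..b} (\<lambda>x. gg t x + hh t x) = integral {a..b} (gg t) + integral {a..b} (hh t)"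
    by (rule integral_add) (use gg_integrable[OF a] hh_integrable[OF a] in auto)
  then show ?thesis using integral_unique[OF ggh_ftc[OF a ab]] by simp
qed

lemma gg_nonneg: "exp (-t) < x \<Longrightarrow> gg t x \<ge> 0"
  using pos_facts(1)[of t x] by simp

lemma hh_nonneg: "exp (-t) < x \<Longrightarrow> hh t x \<ge> 0"
  using pos_facts(2)[of t x] by simp

lemma int_nonneg_gg: fixes t a b :: real assumes a: "exp (-t) < a"
  shows "integral {a..b} (gg t) \<ge> 0"
  by (rule integral_nonneg[OF gg_integrable[OF a]]) (use a in \<open>auto intro!: gg_nonneg\<close>)

lemma int_nonneg_hh: fixes t a b :: real assumes a: "exp (-t) < a"
  shows "integral {a..b} (hh t) \<ge> 0"
  by (rule integral_nonneg[OF hh_integrable[OF a]]) (use a in \<open>auto intro!: hh_nonneg\<close>)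

lemma gg_improper: fixes t a :: real assumes a: "exp (-t) < a"
  shows "gg t integrable_on {a..} \<and> (\<lambda>N. integral {a..a + real N} (gg t)) \<longlonglongrightarrow> integral {a..} (gg t)"
proof -
  define f where "f = (\<lambda>N::nat. \<lambda>x. if x \<in> {a..a + real N} then gg t x else 0)"
  have fi: "integral {a..} (f N) = integral {a..a + real N} (gg t)" for N
  proof -
    have "{a..a + real N} \<inter> {a..} = {a..a + real N}" by auto
    then show ?thesis unfolding f_def integral_restrict_Int by simp
  qed
  have "gg t integrable_on {a..} \<and> (\<lambda>N. integral {a..} (f N)) \<longlonglongrightarrow> integral {a..} (gg t)"
  proof (rule monotone_convergence_increasing)
    fix N
    have "{a..a + real N} \<inter> {a..} = {a..a + real N}" by auto
    then show "f N integrable_on {a..}" unfolding f_def integrable_restrict_Int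
      using gg_integrable[OF a] by simp
  next
    fix N x assume x: "x \<in> {a..}"
    then have "gg t x \<ge> 0" using a by (intro gg_nonneg) auto
    then show "f N x \<le> f (Suc N) x" unfolding f_def using x by auto
  next
    fix x :: real assume x: "x \<in> {a..}"
    have ev: "\<forall>\<^sub>F N in sequentially. f N x = gg t x"
    proof -
      obtain M :: nat where "x - a \<le> real M" using real_arch_simple by blast
      then show ?thesis unfolding f_def eventually_sequentially using x
        by (intro exI[of _ M]) auto
    qed
    show "(\<lambda>N. f N x) \<longlonglongrightarrow> gg t x" using tendsto_cong[OF ev] by simp
  next
    have "\<bar>integral {a..} (f N)\<bar> \<le> GG t a" for N
    proof -
      have "integral {a..a + real N} (gg t) + integral {a..a + real N} (hh t) = GG t a - GG t (a + real N)"
        by (rule ggh_sum_int[OF a]) simp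
      moreover have "GG t (a + real N) > 0" using a by (intro pos_facts) auto
      moreover note int_nonneg_gg[OF a, of "a + real N"] int_nonneg_hh[OF a, of "a + real N"]
      ultimately show ?thesis unfolding fi by linarith
    qed
    then show "bounded (range (\<lambda>N. integral {a..} (f N)))"
      unfolding bounded_iff by (intro exI[of _ "GG t a"]) auto
  qed
  then show ?thesis unfolding fi by simp
qed

lemma GG_lim: fixes t a :: real shows "(\<lambda>N. GG t (a + real N)) \<longlonglongrightarrow> 0"
  unfolding GG_def by real_asymp

lemma gg_int_upper: fixes t a :: real assumes a: "exp (-t) < a"
  shows "integral {a..} (gg t) \<le> GG t a"
proof -
  have "integral {a..a + real N} (gg t) \<le> GG t a" for N
  proof -
    have "integral {a..a + real N} (gg t) + integral {a..a + real N} (hh t) = GG t a - GG t (a + real N)"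
      by (rule ggh_sum_int[OF a]) simp
    moreover have "GG t (a + real N) > 0" using a by (intro pos_facts) auto
    moreover note int_nonneg_hh[OF a, of "a + real N"]
    ultimately show ?thesis by linarith
  qed
  then show ?thesis using gg_improper[OF a] by (intro LIMSEQ_le_const2) auto
qed

lemma gg_int_lower: fixes t a :: real assumes a: "exp (-t) < a"
  shows "GG t a \<le> (1 + 2/(t + ln a)) * integral {a..} (gg t)"
proof -
  note p = dom_pos[OF a]
  have fin: "GG t a - GG t (a + real N) \<le> (1 + 2/(t + ln a)) * integral {a..a + real N} (gg t)" for N
  proof -
    have e: "integral {a..a + real N} (gg t) + integral {a..a + real N} (hh t) = GG t a - GG t (a + real N)"
      by (rule ggh_sum_int[OF a]) simp
    have "integral {a..a + real N} (hh t) \<le> integral {a..a + real N} (\<lambda>x. (2/(t + ln a)) * gg t x)"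
    proof (rule integral_le)
      show "hh t integrable_on {a..a + real N}" by (rule hh_integrable[OF a])
      show "(\<lambda>x. (2/(t + ln a)) * gg t x) integrable_on {a..a + real N}"
        by (rule integrable_on_mult_right[OF gg_integrable[OF a]])
      fix x assume "x \<in> {a..a + real N}"
      then have x: "a \<le> x" by simp
      then have ex: "exp (-t) < x" using a by linarith
      note px = dom_pos[OF ex]
      have Lx: "t + ln a \<le> t + ln x" using x p px by simp
      have gen: "1/(12*x^2*L^3) = 1/(24*x^2*L^2) * (2/L)" if "L > 0" for L :: real
        using px that by (simp add: field_simps power2_eq_square power3_eq_cube)
      have hg: "hh t x = gg t x * (2 / (t + ln x))" unfolding hh_def gg_def using gen[OF px(2)] .
      have "2 / (t + ln x) \<le> 2 / (t + ln a)" using Lx p by (intro divide_left_mono) auto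
      then have "gg t x * (2 / (t + ln x)) \<le> gg t x * (2 / (t + ln a))"
        using gg_nonneg[OF ex] by (intro mult_left_mono) auto
      then show "hh t x \<le> (2/(t + ln a)) * gg t x" unfolding hg by (simp add: mult.commute)
    qed
    also have "\<dots> = (2/(t + ln a)) * integral {a..a + real N} (gg t)" by simp
    finally show ?thesis using e by (simp add: algebra_simps)
  qed
  have l1: "(\<lambda>N. GG t a - GG t (a + real N)) \<longlonglongrightarrow> GG t a - 0"
    by (intro tendsto_intros GG_lim)
  have l2: "(\<lambda>N. (1 + 2/(t + ln a)) * integral {a..a + real N} (gg t)) \<longlonglongrightarrow> (1 + 2/(t + ln a)) * integral {a..} (gg t)"
    using gg_improper[OF a] by (intro tendsto_intros) auto
  show ?thesis using LIMSEQ_le[OF l1 l2] fin by auto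
qed

definition ck :: "real \<Rightarrow> nat \<Rightarrow> real" where
  "ck t k = 1 / (harm k - euler_mascheroni + t)"
definition ak :: "real \<Rightarrow> nat \<Rightarrow> real" where
  "ak t k = integral {real k..real k + 1} (ff t) - ck t k"

lemma ln_gap: fixes k :: real assumes k: "k \<ge> 0"
  shows "(1/24)/(k + 1/2)^2 \<le> ln (k + 1) - ln (k + 1/2)"
proof -
  have "ln ((k + 1/2)/(k + 1)) \<le> (k + 1/2)/(k + 1) - 1" using k by (intro ln_le_minus_one) auto
  also have "\<dots> = - (1/(2*(k+1)))" using k by (simp add: field_simps)
  finally have "1/(2*(k+1)) \<le> ln (k + 1) - ln (k + 1/2)" using k by (simp add: ln_div)
  moreover have "(1/24)/(k + 1/2)^2 \<le> 1/(2*(k+1))"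
  proof -
    have "2*(k+1) \<le> 24 * (k + 1/2)^2" using k by (simp add: power2_eq_square algebra_simps)
    then have "1/(24 * (k + 1/2)^2) \<le> 1/(2*(k+1))" using k by (intro divide_left_mono) auto
    then show ?thesis by simp
  qed
  ultimately show ?thesis by linarith
qed

lemma ak_bounds: fixes t :: real and k :: nat assumes k: "exp (-t) < real k"
  shows "gg t (real k + 1) + hh t (real k + 1) + gg t (real k + 1) \<le> ak t k"
    and "ak t k \<le> gg t (real k) + hh t (real k) + gg t (real k + 1/2)"
proof -
  have k2: "exp (-t) < real k + 1/2" "exp (-t) < real k + 1" using k by linarith+
  note pk = dom_pos[OF k] and pm = dom_pos[OF k2(1)] and p1 = dom_pos[OF k2(2)]
  define Lm where "Lm = t + ln (real k + 1/2)"
  define L1 where "L1 = t + ln (real k + 1)"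
  define e where "e = harm k - euler_mascheroni - ln (real k + 1/2)"
  have Lm: "Lm > 0" using pm Lm_def by simp
  have eu: "e \<le> (1/24)/(real k + 1/2)^2" unfolding e_def by (rule harm_e_upper)
  have el: "e \<ge> (1/24)/(real k + 1)^2" unfolding e_def by (rule harm_e_lower)
  have "(1/24)/(real k + 1)^2 > 0" by simp
  then have epos: "e > 0" using el by linarith
  have ck: "ck t k = 1/(Lm + e)" unfolding ck_def Lm_def e_def by (simp add: algebra_simps)
  have ffm: "ff t (real k + 1/2) = 1/Lm" unfolding ff_def Lm_def ..
  have L1ge: "Lm + e \<le> L1" using eu ln_gap[of "real k"] unfolding Lm_def L1_def by simp
  have d: "1/Lm - 1/(Lm + e) = e/(Lm*(Lm+e))" using Lm epos by (simp add: field_simps)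
  have ggm: "gg t (real k + 1/2) = ((1/24)/(real k + 1/2)^2)/Lm^2" unfolding gg_def Lm_def by simp
  have gg1: "gg t (real k + 1) = ((1/24)/(real k + 1)^2)/L1^2" unfolding gg_def L1_def by simp
  have dU: "e/(Lm*(Lm+e)) \<le> gg t (real k + 1/2)"
  proof -
    have "e/(Lm*(Lm+e)) \<le> e/(Lm*Lm)" using Lm epos by (intro divide_left_mono mult_left_mono) auto
    also have "\<dots> = e/Lm^2" by (simp add: power2_eq_square)
    also have "\<dots> \<le> ((1/24)/(real k + 1/2)^2)/Lm^2" using eu Lm by (intro divide_right_mono) auto
    finally show ?thesis unfolding ggm .
  qed
  have dL: "gg t (real k + 1) \<le> e/(Lm*(Lm+e))"
  proof -
    have "((1/24)/(real k + 1)^2)/L1^2 \<le> e/L1^2" using el by (intro divide_right_mono) auto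
    also have "\<dots> \<le> e/(Lm*(Lm+e))"
    proof (rule divide_left_mono)
      have "Lm*(Lm+e) \<le> L1*L1" using Lm epos L1ge by (intro mult_mono) auto
      then show "Lm*(Lm+e) \<le> L1^2" by (simp add: power2_eq_square)
    qed (use Lm epos L1ge in auto)
    finally show ?thesis unfolding gg1 .
  qed
  note M = M3[OF k]
  show "gg t (real k + 1) + hh t (real k + 1) + gg t (real k + 1) \<le> ak t k"
    using M(1) dL d unfolding ak_def ck ffm by linarith
  show "ak t k \<le> gg t (real k) + hh t (real k) + gg t (real k + 1/2)"
    using M(2) dU d unfolding ak_def ck ffm by linarith
qed

lemma step_right: fixes t x :: real assumes x: "exp (-t) < x"
  shows "GG t x - GG t (x + 1) \<le> gg t x + hh t x"
    and "integral {x..x+1} (gg t) \<le> gg t x"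
proof -
  have mono: "gg t y \<le> gg t x" "hh t y \<le> hh t x" if "y \<in> {x..x+1}" for y
    using gg_hh_mono[OF x, of y] that by auto
  have "integral {x..x+1} (\<lambda>y. gg t y + hh t y) \<le> integral {x..x+1} (\<lambda>y. gg t x + hh t x)"
  proof (rule integral_le)
    show "(\<lambda>y. gg t y + hh t y) integrable_on {x..x+1}" using ggh_ftc[OF x, of "x+1"] by auto
  qed (use mono in \<open>auto intro: add_mono\<close>)
  also have "\<dots> = gg t x + hh t x" by simp
  finally show "GG t x - GG t (x + 1) \<le> gg t x + hh t x"
    using integral_unique[OF ggh_ftc[OF x, of "x+1"]] by simp
  have "integral {x..x+1} (gg t) \<le> integral {x..x+1} (\<lambda>y. gg t x)"
    by (rule integral_le) (use mono gg_integrable[OF x] in auto)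
  also have "\<dots> = gg t x" by simp
  finally show "integral {x..x+1} (gg t) \<le> gg t x" .
qed

lemma int_add_gg: fixes t a b c :: real assumes a: "exp (-t) < a" "a \<le> b" "b \<le> c"
  shows "integral {a..b} (gg t) + integral {b..c} (gg t) = integral {a..c} (gg t)"
  by (rule Henstock_Kurzweil_Integration.integral_combine) (use a gg_integrable[OF a(1)] in auto)


lemma sumA: fixes t a :: real assumes a: "exp (-t) < a"
  shows "(\<Sum>i<j. gg t (a + real i + 1/2)) \<le> integral {a..a + real j} (gg t)"
proof (induction j)
  case 0 then show ?case by simp
next
  case (Suc j)
  have "gg t ((a + real j) + 1/2) \<le> integral {a + real j..(a + real j)+1} (gg t)"
    by (rule M2) (use a in auto)
  moreover have "integral {a..a + real j} (gg t) + integral {a + real j..(a + real j)+1} (gg t) = integral {a..a + real (Suc j)} (gg t)"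
  proof -
    have "a + real (Suc j) = a + real j + 1" by simp
    then show ?thesis by (simp only:) (rule int_add_gg[OF a], auto)
  qed
  moreover have "(\<Sum>i<Suc j. gg t (a + real i + 1/2)) = (\<Sum>i<j. gg t (a + real i + 1/2)) + gg t ((a + real j) + 1/2)"
    by simp
  ultimately show ?case using Suc by linarith
qed

lemma sumB: fixes t a :: real assumes a: "exp (-t) < a"
  shows "(\<Sum>i<Suc j. gg t (a + real i) + hh t (a + real i)) \<le> gg t a + hh t a + GG t (a + 1/2) - GG t (a + real j + 1/2)"
proof (induction j)
  case 0 then show ?case by simp
next
  case (Suc j)
  define F where "F = (\<lambda>i::nat. gg t (a + real i) + hh t (a + real i))"
  have "F (Suc j) \<le> GG t ((a + real (Suc j)) - 1/2) - GG t ((a + real (Suc j)) + 1/2)"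
    unfolding F_def by (rule M1) (use a in auto)
  moreover have "GG t ((a + real (Suc j)) - 1/2) = GG t (a + real j + 1/2)"
    by (rule arg_cong[where f = "GG t"]) simp
  moreover have "(\<Sum>i<Suc (Suc j). F i) = (\<Sum>i<Suc j. F i) + F (Suc j)"
    by (rule sum.lessThan_Suc)
  ultimately show ?case using Suc unfolding F_def by linarith
qed

lemma sumC: fixes t a :: real assumes a: "exp (-t) < a"
  shows "GG t (a + 1) - GG t (a + 1 + real j) \<le> (\<Sum>i<j. gg t (a + real i + 1) + hh t (a + real i + 1))"
proof (induction j)
  case 0 then show ?case by simp
next
  case (Suc j)
  have "GG t (a + 1 + real j) - GG t ((a + 1 + real j) + 1) \<le> gg t (a + 1 + real j) + hh t (a + 1 + real j)"
    by (rule step_right) (use a in auto)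
  moreover have "(a + 1 + real j) + 1 = a + 1 + real (Suc j)" "a + 1 + real j = a + real j + 1" by simp_all
  moreover have "(\<Sum>i<Suc j. gg t (a + real i + 1) + hh t (a + real i + 1)) = (\<Sum>i<j. gg t (a + real i + 1) + hh t (a + real i + 1)) + (gg t (a + real j + 1) + hh t (a + real j + 1))"
    by simp
  ultimately show ?case using Suc by (simp only:)
qed

lemma sumD: fixes t a :: real assumes a: "exp (-t) < a"
  shows "integral {a+1..a+1+real j} (gg t) \<le> (\<Sum>i<j. gg t (a + real i + 1))"
proof (induction j)
  case 0 then show ?case by simp
next
  case (Suc j)
  have "integral {a + 1 + real j..(a + 1 + real j) + 1} (gg t) \<le> gg t (a + 1 + real j)"
    by (rule step_right) (use a in auto)
  moreover have "integral {a+1..a+1+real j} (gg t) + integral {a + 1 + real j..(a + 1 + real j) + 1} (gg t) = integral {a+1..a+1+real (Suc j)} (gg t)"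
    using int_add_gg[of t "a+1" "a + 1 + real j" "a + 1 + real j + 1"] a by (simp add: add.assoc)
  moreover have "a + 1 + real j = a + real j + 1" by simp
  moreover have "(\<Sum>i<Suc j. gg t (a + real i + 1)) = (\<Sum>i<j. gg t (a + real i + 1)) + gg t (a + real j + 1)"
    by simp
  ultimately show ?case using Suc by (simp only:)
qed




lemma beta_x_nat: fixes t r :: real and N :: nat assumes r: "r > 0"
  shows "beta_x (real N) t r = Phi t (real N) - (\<Sum>k\<in>{nat \<lceil>r\<rceil>..<N}. ck t k)"
proof -
  have c0: "\<lceil>r\<rceil> \<ge> 1" using r by simp
  have S: "{k::int. r \<le> real_of_int k \<and> real_of_int k < real N} = int ` {nat \<lceil>r\<rceil>..<N}"
  proof (intro set_eqI iffI)
    fix x :: int assume "x \<in> {k::int. r \<le> real_of_int k \<and> real_of_int k < real N}"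
    then have x: "\<lceil>r\<rceil> \<le> x" "x < int N" by (auto simp: ceiling_le_iff)
    have x1: "x \<ge> 1" using x c0 by linarith
    have "x = int (nat x)" using x1 by simp
    moreover have "nat \<lceil>r\<rceil> \<le> nat x" using x(1) by (rule nat_mono)
    moreover have "nat x < N" using x x1 by linarith
    ultimately show "x \<in> int ` {nat \<lceil>r\<rceil>..<N}" by (metis atLeastLessThan_iff image_eqI)
  next
    fix x :: int assume "x \<in> int ` {nat \<lceil>r\<rceil>..<N}"
    then obtain m where m: "x = int m" "nat \<lceil>r\<rceil> \<le> m" "m < N" by auto
    then have "\<lceil>r\<rceil> \<le> x" using c0 by linarith
    then show "x \<in> {k::int. r \<le> real_of_int k \<and> real_of_int k < real N}"
      using m by (auto simp: ceiling_le_iff)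
  qed
  have "(\<Sum>k\<in>{k::int. r \<le> real_of_int k \<and> real_of_int k < real N}. 1 / (harm (nat k) - euler_mascheroni + t))
      = (\<Sum>k\<in>{nat \<lceil>r\<rceil>..<N}. ck t k)"
    unfolding S by (subst sum.reindex) (auto simp: ck_def)
  then show ?thesis unfolding beta_x_def Phi_def by simp
qed

lemma beta_shift: fixes t r :: real and n j :: nat
  assumes r: "r > exp (-t)" and n: "\<lceil>r\<rceil> \<le> int n"
  shows "beta_x (real (n + j)) t r = beta_x (real n) t r + (\<Sum>i<j. ak t (n + i))"
proof (induction j)
  case 0 then show ?case by simp
next
  case (Suc j)
  have r0: "r > 0" using r exp_gt_zero[of "-t"] by linarith
  have "r \<le> real n" using n by (simp add: ceiling_le_iff)
  then have en: "exp (-t) < real (n + j)" using r by simp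
  have m: "nat \<lceil>r\<rceil> \<le> n + j" using n by linarith
  have "(\<Sum>k\<in>{nat \<lceil>r\<rceil>..<Suc (n + j)}. ck t k) = (\<Sum>k\<in>{nat \<lceil>r\<rceil>..<n + j}. ck t k) + ck t (n + j)"
    by (rule sum.atLeastLessThan_Suc[OF m])
  moreover have "Phi t (real (n + j) + 1) - Phi t (real (n + j)) = integral {real (n + j)..real (n + j) + 1} (ff t)"
    using integral_unique[OF Phi_ftc[OF en, of "real (n + j) + 1"]] by simp
  ultimately have "beta_x (real (n + Suc j)) t r = beta_x (real (n + j)) t r + ak t (n + j)"
    unfolding beta_x_nat[OF r0] ak_def by (simp add: add.commute)
  then show ?case using Suc by simp
qed

lemma main_bounds: fixes t r :: real and n :: nat
  assumes r: "r > exp (-t)" and n: "\<lceil>r\<rceil> \<le> int n"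
  shows "GG t (real n + 1) + integral {real n + 1..} (gg t) \<le> beta t r - beta_x (real n) t r"
    and "beta t r - beta_x (real n) t r \<le> integral {real n..} (gg t) + GG t (real n + 1/2) + gg t (real n) + hh t (real n)"
proof -
  define a where "a = real n"
  have "r \<le> real n" using n by (simp add: ceiling_le_iff)
  then have a: "exp (-t) < a" using r a_def by simp
  have a1: "exp (-t) < a + 1" using a by simp
  define T where "T = (\<lambda>j. \<Sum>i<j. ak t (n + i))"
  have akb: "gg t (a + real i + 1) + hh t (a + real i + 1) + gg t (a + real i + 1) \<le> ak t (n + i)"
    "ak t (n + i) \<le> gg t (a + real i) + hh t (a + real i) + gg t (a + real i + 1/2)" for i
  proof -
    have e: "exp (-t) < real (n + i)" using a a_def by simp
    have ra: "real (n + i) = a + real i" unfolding a_def by simp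
    show "gg t (a + real i + 1) + hh t (a + real i + 1) + gg t (a + real i + 1) \<le> ak t (n + i)"
      using ak_bounds(1)[OF e] unfolding ra .
    show "ak t (n + i) \<le> gg t (a + real i) + hh t (a + real i) + gg t (a + real i + 1/2)"
      using ak_bounds(2)[OF e] unfolding ra .
  qed
  have ak_nn: "ak t (n + i) \<ge> 0" for i
  proof -
    have "exp (-t) < a + real i + 1" using a by simp
    note pos_facts[OF this]
    then show ?thesis using akb(1)[of i] by linarith
  qed
  have ggi: "gg t integrable_on {a..}" and gglim: "(\<lambda>N. integral {a..a + real N} (gg t)) \<longlonglongrightarrow> integral {a..} (gg t)"
    using gg_improper[OF a] by auto
  define U where "U = integral {a..} (gg t) + GG t (a + 1/2) + gg t a + hh t a"
  have TU: "T j \<le> U" for j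
  proof -
    have "T j \<le> (\<Sum>i<j. gg t (a + real i) + hh t (a + real i)) + (\<Sum>i<j. gg t (a + real i + 1/2))"
      unfolding T_def sum.distrib[symmetric] by (intro sum_mono) (use akb(2) in \<open>simp add: add.assoc\<close>)
    also have "(\<Sum>i<j. gg t (a + real i) + hh t (a + real i)) \<le> gg t a + hh t a + GG t (a + 1/2)"
    proof -
      have "(\<Sum>i<Suc j. gg t (a + real i) + hh t (a + real i)) = (\<Sum>i<j. gg t (a + real i) + hh t (a + real i)) + (gg t (a + real j) + hh t (a + real j))"
        by (rule sum.lessThan_Suc)
      moreover have "exp (-t) < a + real j" "exp (-t) < a + real j + 1/2" using a by auto
      note pos_facts[OF this(1)] pos_facts[OF this(2)]
      moreover note sumB[OF a, of j]
      ultimately show ?thesis by linarith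
    qed
    also have "(\<Sum>i<j. gg t (a + real i + 1/2)) \<le> integral {a..} (gg t)"
    proof -
      have "integral {a..a + real j} (gg t) \<le> integral {a..} (gg t)"
        by (rule integral_subset_le[OF _ gg_integrable[OF a] ggi]) (use a in \<open>auto intro!: gg_nonneg\<close>)
      then show ?thesis using sumA[OF a, of j] by linarith
    qed
    finally show ?thesis unfolding U_def by simp
  qed
  have Tinc: "incseq T" unfolding T_def by (rule incseq_SucI) (simp add: ak_nn)
  have Tbdd: "bdd_above (range T)" using TU by (intro bdd_aboveI2) auto
  define Ls where "Ls = (SUP j. T j)"
  have TL: "T \<longlonglongrightarrow> Ls" unfolding Ls_def by (rule LIMSEQ_incseq_SUP[OF Tbdd Tinc])
  have "(\<lambda>j. beta_x (real (j + n)) t r) \<longlonglongrightarrow> beta_x (real n) t r + Ls"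
  proof -
    have "(\<lambda>j. beta_x (real n) t r + T j) \<longlonglongrightarrow> beta_x (real n) t r + Ls" by (intro tendsto_intros TL)
    moreover have "beta_x (real (j + n)) t r = beta_x (real n) t r + T j" for j
      using beta_shift[OF r n, of j] unfolding T_def by (simp add: add.commute)
    ultimately show ?thesis by simp
  qed
  then have "(\<lambda>N. beta_x (real N) t r) \<longlonglongrightarrow> beta_x (real n) t r + Ls" by (rule LIMSEQ_offset)
  then have bt: "beta t r = beta_x (real n) t r + Ls" unfolding beta_def by (rule limI)
  have "Ls \<le> U" using TL TU by (intro LIMSEQ_le_const2) auto
  then show "beta t r - beta_x (real n) t r \<le> integral {real n..} (gg t) + GG t (real n + 1/2) + gg t (real n) + hh t (real n)"
    using bt unfolding U_def a_def by simp
  define lo where "lo = (\<lambda>j. GG t (a + 1) - GG t (a + 1 + real j) + integral {a+1..a+1+real j} (gg t))"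
  have loT: "lo j \<le> T j" for j
  proof -
    have "(\<Sum>i<j. gg t (a + real i + 1) + hh t (a + real i + 1)) + (\<Sum>i<j. gg t (a + real i + 1)) \<le> T j"
      unfolding T_def sum.distrib[symmetric] by (intro sum_mono) (use akb(1) in simp)
    then show ?thesis unfolding lo_def using sumC[OF a, of j] sumD[OF a, of j] by linarith
  qed
  have lolim: "lo \<longlonglongrightarrow> GG t (a + 1) - 0 + integral {a+1..} (gg t)"
    unfolding lo_def using gg_improper[OF a1] by (intro tendsto_intros GG_lim) auto
  have "GG t (a + 1) - 0 + integral {a+1..} (gg t) \<le> Ls"
    using lolim TL loT by (intro LIMSEQ_le[OF lolim TL]) auto
  then show "GG t (real n + 1) + integral {real n + 1..} (gg t) \<le> beta t r - beta_x (real n) t r"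
    using bt unfolding a_def by simp
qed

theorem corollary3p10:
  fixes t r :: real
  assumes "r > exp (- t)"
  shows "(\<forall>n::nat. ceiling r \<le> int n \<longrightarrow>
      integral {real n + 1..} (\<lambda>x. 1 / (24 * x^2 * (t + ln x)^2))
        + 1 / (24 * (real n + 1) * (t + ln (real n + 1))^2)
        \<le> beta t r - beta_x (real n) t r
    \<and> beta t r - beta_x (real n) t r
        \<le> integral {real n..} (\<lambda>x. 1 / (24 * x^2 * (t + ln x)^2))
          + 1 / (24 * (real n + 1/2) * (t + ln (real n + 1/2))^2)
          + 1 / (24 * (real n)^2 * (t + ln (real n))^2)
          + 1 / (12 * (real n)^2 * (t + ln (real n))^3))
    \<and> (\<lambda>n::nat. beta t r - beta_x (real n) t r)
        \<sim>[at_top] (\<lambda>n. 1 / (12 * real n * (ln (real n))^2))"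
proof (intro conjI allI impI)
  fix n :: nat assume n: "ceiling r \<le> int n"
  show "integral {real n + 1..} (\<lambda>x. 1 / (24 * x^2 * (t + ln x)^2))
        + 1 / (24 * (real n + 1) * (t + ln (real n + 1))^2)
        \<le> beta t r - beta_x (real n) t r"
    using main_bounds(1)[OF assms n] unfolding GG_def gg_def by linarith
  show "beta t r - beta_x (real n) t r
        \<le> integral {real n..} (\<lambda>x. 1 / (24 * x^2 * (t + ln x)^2))
          + 1 / (24 * (real n + 1/2) * (t + ln (real n + 1/2))^2)
          + 1 / (24 * (real n)^2 * (t + ln (real n))^2)
          + 1 / (12 * (real n)^2 * (t + ln (real n))^3)"
    using main_bounds(2)[OF assms n] unfolding GG_def gg_def hh_def by linarith
next
  define w where "w = (\<lambda>n::nat. 1 / (12 * real n * (ln (real n))^2))"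
  define D where "D = (\<lambda>n::nat. beta t r - beta_x (real n) t r)"
  define lo where "lo = (\<lambda>n::nat. GG t (real n + 1) + GG t (real n + 1) / (1 + 2/(t + ln (real n + 1))))"
  define hi where "hi = (\<lambda>n::nat. GG t (real n) + GG t (real n + 1/2) + gg t (real n) + hh t (real n))"
  have ev: "\<forall>\<^sub>F n in at_top. lo n / w n \<le> D n / w n \<and> D n / w n \<le> hi n / w n"
    using eventually_ge_at_top[of "max 2 (nat \<lceil>r\<rceil>)"]
  proof (rule eventually_mono)
    fix n :: nat assume nn: "max 2 (nat \<lceil>r\<rceil>) \<le> n"
    then have n: "\<lceil>r\<rceil> \<le> int n" by linarith
    have "r \<le> real n" using n by (simp add: ceiling_le_iff)
    then have a: "exp (-t) < real n" and a1: "exp (-t) < real n + 1" using assms by simp_all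
    have "real n \<ge> 2" using nn by simp
    then have "ln (real n) > 0" by simp
    then have wp: "w n > 0" unfolding w_def using \<open>real n \<ge> 2\<close> by simp
    note pa = dom_pos[OF a1]
    have c: "1 + 2/(t + ln (real n + 1)) > 0" using pa by (simp add: add_pos_pos)
    have "GG t (real n + 1) / (1 + 2/(t + ln (real n + 1))) \<le> integral {real n + 1..} (gg t)"
      using gg_int_lower[OF a1] c by (simp add: divide_le_eq mult.commute)
    then have "lo n \<le> D n" using main_bounds(1)[OF assms n] unfolding lo_def D_def by linarith
    moreover have "D n \<le> hi n" using main_bounds(2)[OF assms n] gg_int_upper[OF a] unfolding hi_def D_def by linarith
    ultimately show "lo n / w n \<le> D n / w n \<and> D n / w n \<le> hi n / w n"
      using wp by (simp add: divide_right_mono)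
  qed
  have l1: "(\<lambda>n. lo n / w n) \<longlonglongrightarrow> 1" unfolding lo_def w_def GG_def by real_asymp
  have l2: "(\<lambda>n. hi n / w n) \<longlonglongrightarrow> 1" unfolding hi_def w_def GG_def gg_def hh_def by real_asymp
  have "(\<lambda>n. D n / w n) \<longlonglongrightarrow> 1"
    by (rule tendsto_sandwich[OF _ _ l1 l2]) (use ev in \<open>auto elim: eventually_mono\<close>)
  then have "D \<sim>[at_top] w" by (rule asymp_equivI')
  then show "(\<lambda>n::nat. beta t r - beta_x (real n) t r) \<sim>[at_top] (\<lambda>n. 1 / (12 * real n * (ln (real n))^2))"
    unfolding D_def w_def .
qed


end
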